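(* Fix $t>1$. For $n=1,2,\ldots$ let $a_n=1^{t^n}\cdot2^{t^{n-1}}\cdot3^{t^{n-2}}\cdots n^{t^1}$. Then $$\lim_{n\to\infty}a_n^{1/t^n}=\sigma_t^{\,t}<\infty,$$ where $\sigma_t=\prod_{n=1}^\infty n^{1/t^n}$. Moreover, with $$b_n=\sqrt[t]{a_1+\sqrt[t]{a_2+\cdots+\sqrt[t]{a_{n-1}+\sqrt[t]{a_n}}}},\qquad B_n=\sqrt[t]{1+2\sqrt[t]{1+3\sqrt[t]{1+\cdots+(n-1)\sqrt[t]{1+n\sqrt[t]{1}}}}},$$ both sequences $(b_n)_{n\ge1}$ and $(B_n)_{n\ge1}$ converge, and $\lim_{n\to\infty}b_n=\lim_{n\to\infty}B_n$.
   Context: For $a\ge0$ and $t>0$, $\sqrt[t]{a}=a^{1/t}\ge0$ denotes the nonnegative root. *)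

theory Defs
  imports "HOL-Analysis.Analysis"
begin

definition seq_a :: "real \<Rightarrow> nat \<Rightarrow> real" where
  "seq_a t n = (\<Prod>k=1..n. real k powr (t ^ (n + 1 - k)))"

text \<open>nest_b t f i m = root_t(f i + root_t(f (i+1) + ... + root_t(f (i+m-1)))) (m radicals);
  so b_n = nest_b t (seq_a t) 1 n.\<close>
fun nest_b :: "real \<Rightarrow> (nat \<Rightarrow> real) \<Rightarrow> nat \<Rightarrow> nat \<Rightarrow> real" where
  "nest_b t f i 0 = 0"
| "nest_b t f i (Suc m) = (f i + nest_b t f (Suc i) m) powr (1 / t)"

text \<open>nest_B t i m = root_t(1 + (i+1) root_t(1 + ... + (i+m) root_t(1)));
  so B_n = nest_B t 1 (n-1).\<close>
fun nest_B :: "real \<Rightarrow> nat \<Rightarrow> nat \<Rightarrow> real" where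
  "nest_B t i 0 = 1 powr (1 / t)"
| "nest_B t i (Suc m) = (1 + real (Suc i) * nest_B t (Suc i) m) powr (1 / t)"

end

theory Submission
  imports Defs
begin

lemma seq_a_nonneg: "seq_a t k \<ge> 0"
  unfolding seq_a_def by (rule prod_nonneg) auto

lemma seq_a_Suc: "seq_a t (Suc k) = (seq_a t k * real (Suc k)) powr t"
proof -
  have "seq_a t (Suc k) = (\<Prod>j=1..k. real j powr (t ^ (Suc k + 1 - j))) * real (Suc k) powr t"
    unfolding seq_a_def by (simp add: prod.cl_ivl_Suc)
  also have "(\<Prod>j=1..k. real j powr (t ^ (Suc k + 1 - j))) = (\<Prod>j=1..k. (real j powr (t ^ (k + 1 - j))) powr t)"
  proof (rule prod.cong)
    fix j assume "j \<in> {1..k}"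
    then have "Suc k + 1 - j = Suc (k + 1 - j)" by auto
    then show "real j powr (t ^ (Suc k + 1 - j)) = (real j powr (t ^ (k + 1 - j))) powr t"
      by (simp add: powr_powr mult.commute)
  qed simp
  also have "\<dots> = seq_a t k powr t"
    unfolding seq_a_def by (simp add: prod_powr_distrib)
  finally show ?thesis by (simp add: powr_mult seq_a_nonneg)
qed

lemma seq_a_root: "t > 0 \<Longrightarrow> seq_a t (Suc k) powr (1/t) = seq_a t k * real (Suc k)"
  by (simp add: seq_a_Suc powr_powr seq_a_nonneg)

lemma nest_B_nonneg: "nest_B t i m \<ge> 0"
  by (cases m) auto

lemma nest_b_B: "t > 0 \<Longrightarrow> nest_b t (seq_a t) k (Suc m) = seq_a t k powr (1/t) * nest_B t k m"
proof (induction m arbitrary: k)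
  case 0
  then show ?case by simp
next
  case (Suc m)
  have "nest_b t (seq_a t) k (Suc (Suc m)) = (seq_a t k + seq_a t (Suc k) powr (1/t) * nest_B t (Suc k) m) powr (1/t)"
    using Suc by simp
  also have "\<dots> = (seq_a t k * (1 + real (Suc k) * nest_B t (Suc k) m)) powr (1/t)"
    using Suc.prems by (simp add: seq_a_root algebra_simps)
  also have "\<dots> = seq_a t k powr (1/t) * nest_B t k (Suc m)"
    by (simp add: powr_mult seq_a_nonneg nest_B_nonneg)
  finally show ?case .
qed

lemma nest_B_mono: "nest_B t i m \<le> nest_B t i (Suc m)" if "t > 0"
  using that
proof (induction m arbitrary: i)
  case 0
  then show ?case by (simp add: ge_one_powr_ge_zero)
next
  case (Suc m)
  have ih: "nest_B t (Suc i) m \<le> nest_B t (Suc i) (Suc m)" using Suc by blast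
  show ?case unfolding nest_B.simps(2)[of t i]
    using ih Suc.prems by (intro powr_mono2) (auto intro!: mult_left_mono simp: nest_B_nonneg add_nonneg_nonneg)
qed

lemma nest_b_nonneg: "nest_b t f i m \<ge> 0"
  by (cases m) auto

lemma nest_b_bound:
  assumes t: "t > 1" and L: "L \<ge> 0" "1 + L \<le> L powr t" and D: "D > 0"
    and f: "\<And>k. 0 \<le> f k" "\<And>k. f k \<le> D powr (t ^ k)"
  shows "nest_b t f i m \<le> L * D powr (t ^ i / t)"
proof (induction m arbitrary: i)
  case 0
  then show ?case using L D by simp
next
  case (Suc m)
  have e: "t ^ Suc i / t = t ^ i" using t by simp
  have "nest_b t f i (Suc m) = (f i + nest_b t f (Suc i) m) powr (1/t)" by simp
  also have "\<dots> \<le> (D powr (t ^ i) + L * D powr (t ^ i)) powr (1/t)"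
    using Suc[of "Suc i"] f[of i] t unfolding e
    by (intro powr_mono2) (auto intro!: add_nonneg_nonneg nest_b_nonneg f)
  also have "\<dots> = (D powr (t ^ i) * (1 + L)) powr (1/t)" by (simp add: algebra_simps)
  also have "\<dots> \<le> (D powr (t ^ i) * L powr t) powr (1/t)"
    using t L by (intro powr_mono2 mult_left_mono) auto
  also have "\<dots> = L * D powr (t ^ i / t)"
    using t L by (simp add: powr_mult powr_powr)
  finally show ?case .
qed

theorem corollary25:
  fixes t :: real
  assumes "t > 1"
  shows "convergent_prod (\<lambda>n. real (Suc n) powr (1 / t ^ Suc n))
    \<and> (\<lambda>n. seq_a t n powr (1 / t ^ n))
        \<longlonglongrightarrow> (\<Prod>n. real (Suc n) powr (1 / t ^ Suc n)) powr t
    \<and> convergent (\<lambda>n. nest_b t (seq_a t) 1 (Suc n))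
    \<and> convergent (\<lambda>n. nest_B t 1 n)
    \<and> lim (\<lambda>n. nest_b t (seq_a t) 1 (Suc n)) = lim (\<lambda>n. nest_B t 1 n)"
proof -
  define u where "u n = real (Suc n) powr (1 / t ^ Suc n)" for n
  define P where "P n = (\<Prod>j<n. u j)" for n
  have t0: "t > 0" using assms by simp
  have u_exp: "u n = exp (ln (real (Suc n)) / t ^ Suc n)" for n
    unfolding u_def by (simp add: powr_def)
  have sm0: "summable (\<lambda>n. real (Suc n) * (1/t) ^ n)"
    using geometric_deriv_sums[of "1/t"] assms by (auto simp: sums_iff)
  have sm: "summable (\<lambda>n. ln (real (Suc n)) / t ^ Suc n)"
  proof (rule summable_comparison_test[OF _ sm0], intro exI allI impI)
    fix n :: nat
    have "ln (real (Suc n)) \<le> real (Suc n)" by (rule ln_le_minus_one[THEN order_trans]) auto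
    moreover have "t ^ Suc n \<ge> t ^ n" using assms by simp
    ultimately have "ln (real (Suc n)) / t ^ Suc n \<le> real (Suc n) / t ^ n"
      using assms by (intro frac_le) auto
    moreover have "\<bar>t * t ^ n\<bar> = t * t ^ n" using assms by simp
    ultimately show "norm (ln (real (Suc n)) / t ^ Suc n) \<le> real (Suc n) * (1/t) ^ n"
      by (simp add: power_divide)
  qed
  have cp: "convergent_prod u"
    unfolding u_exp by (rule convergent_prod_exp[OF sm])
  have u1: "u n \<ge> 1" for n
    unfolding u_def using t0 by (simp add: ge_one_powr_ge_zero)
  have hp: "u has_prod prodinf u" using cp convergent_prod_has_prod by blast
  have Pge: "prodinf u \<ge> 1" by (rule prodinf_nonneg[OF hp u1])
  have Ple: "P n \<le> prodinf u" for n
    unfolding P_def using u1 by (intro prod_le_prodinf[OF hp]) (auto intro: order_trans[OF zero_le_one])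
  have P0: "P n \<ge> 0" for n unfolding P_def using u1 by (intro prod_nonneg) (auto intro: order_trans[OF zero_le_one])
  have Plim: "P \<longlonglongrightarrow> prodinf u"
  proof -
    have "(\<lambda>n. P (Suc n)) \<longlonglongrightarrow> prodinf u"
      unfolding P_def lessThan_Suc_atMost by (rule convergent_prod_LIMSEQ[OF cp])
    then show ?thesis by (simp add: filterlim_sequentially_Suc)
  qed
  have key: "seq_a t n powr (1 / t ^ n) = P n powr t" for n
  proof (induction n)
    case 0
    then show ?case by (simp add: seq_a_def P_def)
  next
    case (Suc n)
    have "seq_a t (Suc n) powr (1 / t ^ Suc n) = ((seq_a t n * real (Suc n)) powr t) powr (1 / t ^ Suc n)"
      by (simp add: seq_a_Suc)
    also have "\<dots> = (seq_a t n * real (Suc n)) powr (1 / t ^ n)"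
      using t0 by (simp add: powr_powr)
    also have "\<dots> = seq_a t n powr (1 / t ^ n) * real (Suc n) powr (1 / t ^ n)"
      by (simp add: powr_mult seq_a_nonneg)
    also have "real (Suc n) powr (1 / t ^ n) = u n powr t"
      unfolding u_def using t0 by (simp add: powr_powr)
    also have "seq_a t n powr (1 / t ^ n) * u n powr t = (P n * u n) powr t"
      using Suc P0[of n] u1[of n] by (simp add: powr_mult)
    finally show ?case by (simp add: P_def)
  qed
  have lim2: "(\<lambda>n. seq_a t n powr (1 / t ^ n)) \<longlonglongrightarrow> prodinf u powr t"
    unfolding key using Pge by (intro tendsto_powr Plim) auto
  have eq: "nest_b t (seq_a t) 1 (Suc n) = nest_B t 1 n" for n
    using nest_b_B[OF t0, of 1 n] by (simp add: seq_a_def)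
  define D where "D = prodinf u powr t"
  define L where "L = (2::real) powr (1 / (t - 1))"
  have D0: "D > 0" unfolding D_def using Pge by simp
  have L1: "L \<ge> 1" unfolding L_def using assms by (simp add: ge_one_powr_ge_zero)
  have "L powr t = L powr (1 + (t - 1))" by simp
  also have "\<dots> = L * L powr (t - 1)" using L1 powr_add[of L 1 "t - 1"] by simp
  also have "L powr (t - 1) = 2" unfolding L_def using assms by (simp add: powr_powr)
  finally have L2: "1 + L \<le> L powr t" using L1 by simp
  have abound: "seq_a t k \<le> D powr (t ^ k)" for k
  proof -
    have "seq_a t k = (seq_a t k powr (1 / t ^ k)) powr (t ^ k)"
      using t0 by (simp add: powr_powr seq_a_nonneg)
    also have "\<dots> = (P k powr t) powr (t ^ k)" by (simp add: key)
    also have "\<dots> \<le> D powr (t ^ k)"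
      unfolding D_def using t0 P0[of k] Ple[of k] by (intro powr_mono2 ) auto
    finally show ?thesis .
  qed
  have bnd: "nest_B t 1 n \<le> L * D" for n
  proof -
    have "nest_b t (seq_a t) 1 (Suc n) \<le> L * D powr (t ^ 1 / t)"
      using L1 by (intro nest_b_bound[OF assms _ L2 D0 seq_a_nonneg abound]) auto
    then show ?thesis using t0 D0 by (simp only: eq) simp
  qed
  have inc: "incseq (\<lambda>n. nest_B t 1 n)"
    by (rule incseq_SucI) (rule nest_B_mono[OF t0])
  obtain l where "(\<lambda>n. nest_B t 1 n) \<longlonglongrightarrow> l"
    using incseq_convergent[OF inc, of "L * D"] bnd by blast
  then have conv: "convergent (\<lambda>n. nest_B t 1 n)" by (auto simp: convergent_def)
  show ?thesis
    using cp lim2 conv unfolding u_def eq by simp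
qed

end
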